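(* Let $U\subset\mathbb R^n$ be open, $X$ a $C^1$ vector field on $U$, $f=(f_0,f_1,\dots,f_\ell):U\to\mathbb R^{r+\ell}$ a $C^2$ map, $x_0\in U$, $K$ a constant symmetric positive definite $(r+\ell)\times(r+\ell)$ matrix, and $V(x)=\tfrac12(f(x)-f(x_0))^TK(f(x)-f(x_0))$. Assume $\nabla V(x)\cdot X(x)=0$ for all $x\in U$, $V^{-1}(0)$ is compact, and there is an open set $W\subset U$ containing $V^{-1}(0)$ such that $Df(x)$ is onto for all $x\in W\setminus V^{-1}(0)$. Then there is a number $c>0$ (restricting the system, if necessary, to an open neighborhood of $V^{-1}(0)$ contained in $W$) such that every trajectory of $\dot x = X(x)-\nabla V(x)$ starting in $V^{-1}([0,c])$ remains in $V^{-1}([0,c])$ for all $t\ge0$ and converges to $V^{-1}(0)$ as $t\to\infty$. *)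

theory Defs
  imports "HOL-Analysis.Analysis"
begin

definition C1_on :: "'a::euclidean_space set \<Rightarrow> ('a \<Rightarrow> 'b::real_normed_vector) \<Rightarrow> bool" where
  "C1_on S g \<longleftrightarrow> (\<exists>g'. (\<forall>x\<in>S. (g has_derivative blinfun_apply (g' x)) (at x)) \<and> continuous_on S g')"

definition C2_on :: "'a::euclidean_space set \<Rightarrow> ('a \<Rightarrow> 'b::real_normed_vector) \<Rightarrow> bool" where
  "C2_on S g \<longleftrightarrow> (\<exists>g'. (\<forall>x\<in>S. (g has_derivative blinfun_apply (g' x)) (at x)) \<and> C1_on S g')"

definition grad :: "(real^'n \<Rightarrow> real) \<Rightarrow> real^'n \<Rightarrow> real^'n" where
  "grad V x = (SOME g. (V has_derivative (\<lambda>h. g \<bullet> h)) (at x))"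

definition sym_pos_def :: "real^'m^'m \<Rightarrow> bool" where
  "sym_pos_def K \<longleftrightarrow> transpose K = K \<and> (\<forall>v. v \<noteq> 0 \<longrightarrow> v \<bullet> (K *v v) > 0)"

end

theory Submission
  imports Defs
begin


lemma at_within_Ici_Icc:
  fixes t b :: real assumes "0 \<le> t" "t < b"
  shows "at t within {0..} = at t within {0..b}"
proof (cases "t = 0")
  case True thus ?thesis using assms by (simp add: at_within_Ici_at_right at_within_Icc_at_right)
next
  case False
  then have "t > 0" using assms by simp
  have "at t within {0..} = at t"
    by (rule at_within_interior) (use \<open>t>0\<close> in simp)
  also have "\<dots> = at t within {0..b}" using \<open>t>0\<close> assms by (simp add: at_within_Icc_at)
  finally show ?thesis .
qed

lemma picard_global:
  fixes G :: "'a::euclidean_space \<Rightarrow> 'a"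
  assumes lip: "L-lipschitz_on UNIV G" and Lpos: "L > 0" and bnd: "\<And>y. norm (G y) \<le> M"
  shows "\<exists>\<phi>. \<phi> 0 = x0 \<and> (\<forall>t\<ge>0. (\<phi> has_vector_derivative G (\<phi> t)) (at t within {0..}))"
proof -
  define k where "k = 2*L"
  have k0: "k > 0" using Lpos by (simp add: k_def)
  have M0: "M \<ge> 0" using bnd[of 0] norm_ge_zero order_trans by blast
  have Gc: "continuous_on UNIV G" using lipschitz_on_continuous_on[OF lip] .
  define H where "H g s = G (x0 + exp (k * s) *\<^sub>R g s)" for g :: "real \<Rightarrow> 'a" and s
  have Hc: "continuous_on UNIV (H g)" if "continuous_on UNIV g" for g
    unfolding H_def
    by (rule continuous_on_compose2[OF Gc]) (auto intro!: continuous_intros that)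
  define Q where "Q g t = exp (-k * max 0 t) *\<^sub>R integral {0..max 0 t} (H g)" for g t
  have Qc: "continuous_on UNIV (Q g)" if "continuous_on UNIV g" for g
  proof -
    have I: "continuous_on {0..b} (\<lambda>u. integral {0..u} (H g))" for b
      by (rule indefinite_integral_continuous_1)
         (rule integrable_continuous_real, rule continuous_on_subset[OF Hc[OF that]], simp)
    have cb: "continuous_on (ball t 1) (Q g)" for t
    proof -
      have "continuous_on (ball t 1) (\<lambda>u. integral {0..max 0 u} (H g))"
        by (rule continuous_on_compose2[OF I[of "\<bar>t\<bar>+1"]])
           (auto intro!: continuous_intros simp: dist_real_def)
      then show ?thesis unfolding Q_def by (auto intro!: continuous_intros)
    qed
    then have "isCont (Q g) t" for t
      by (meson cb centre_in_ball continuous_on_eq_continuous_at open_ball zero_less_one)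
    then show ?thesis by (simp add: continuous_at_imp_continuous_on)
  qed
  have Qbd: "norm (Q g t) \<le> M / k" if "continuous_on UNIV g" for g t
  proof -
    define u where "u = max 0 t"
    have u0: "u \<ge> 0" by (simp add: u_def)
    have "norm (integral {0..u} (H g)) \<le> M * (u - 0)"
      by (rule integral_bound[OF u0 continuous_on_subset[OF Hc[OF that]]]) (auto simp: H_def bnd)
    then have "norm (Q g t) \<le> exp (-k * u) * (M*u)" unfolding Q_def u_def[symmetric]
      by (simp add: mult_left_mono)
    also have "\<dots> \<le> M / k"
    proof -
      have "k * u \<le> exp (k * u)" using exp_ge_add_one_self[of "k * u"] by linarith
      then have "exp (-k * u) * (k * u) \<le> 1" by (simp add: exp_minus field_simps)
      then have "exp (-k * u) * (M*u) * k \<le> M"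
        using M0 by (metis mult.commute mult.left_commute mult_left_mono mult.right_neutral)
      then show ?thesis using k0 by (simp add: field_simps)
    qed
    finally show ?thesis .
  qed
  have Qb: "Q g \<in> bcontfun" if "continuous_on UNIV g" for g
    unfolding bcontfun_def using Qc[OF that] Qbd[OF that]
    by (auto simp: bounded_iff)
  define P where "P g = Bcontfun (Q (apply_bcontfun g))" for g
  have Papp: "apply_bcontfun (P g) = Q (apply_bcontfun g)" for g
    unfolding P_def by (rule Bcontfun_inverse[OF Qb]) (simp add: continuous_on_apply_bcontfun)
  have contr: "dist (P g) (P h) \<le> (1/2) * dist g h" for g h
  proof (rule dist_bound)
    fix t :: real
    define d where "d = dist g h"
    define u where "u = max 0 t"
    have u0: "u \<ge> 0" by (simp add: u_def)
    have gc: "continuous_on UNIV (apply_bcontfun g)" "continuous_on UNIV (apply_bcontfun h)"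
      by (simp_all add: continuous_on_apply_bcontfun)
    have int1: "H (apply_bcontfun g) integrable_on {0..u}" "H (apply_bcontfun h) integrable_on {0..u}"
      by (auto intro!: integrable_continuous_real continuous_on_subset[OF Hc] gc)
    have E: "((\<lambda>s. exp (k * s)) has_integral (exp (k * u) - 1) / k) {0..u}"
    proof -
      have "((\<lambda>s. exp (k * s)) has_integral ((\<lambda>s. exp (k * s)/k) u - (\<lambda>s. exp (k * s)/k) 0)) {0..u}"
        by (rule fundamental_theorem_of_calculus[OF u0])
           (use k0 in \<open>auto intro!: derivative_eq_intros simp: has_real_derivative_iff_has_vector_derivative[symmetric]\<close>)
      then show ?thesis by (simp add: diff_divide_distrib)
    qed
    have "norm (integral {0..u} (\<lambda>s. H (apply_bcontfun g) s - H (apply_bcontfun h) s))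
        \<le> integral {0..u} (\<lambda>s. (L*d) * exp (k * s))"
    proof (rule integral_norm_bound_integral)
      show "(\<lambda>s. H (apply_bcontfun g) s - H (apply_bcontfun h) s) integrable_on {0..u}"
        using int1 by (rule integrable_diff)
      show "(\<lambda>s. (L*d) * exp (k * s)) integrable_on {0..u}"
        using has_integral_mult_right[OF E, of "L*d"] by blast
      fix s
      have "norm (H (apply_bcontfun g) s - H (apply_bcontfun h) s)
          \<le> L * dist (x0 + exp (k * s) *\<^sub>R g s) (x0 + exp (k * s) *\<^sub>R h s)"
        using lipschitz_onD[OF lip, of "x0 + exp (k * s) *\<^sub>R g s" "x0 + exp (k * s) *\<^sub>R h s"]
        by (simp add: H_def dist_norm)
      also have "\<dots> = L * (exp (k * s) * dist (g s) (h s))"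
        by (simp add: dist_norm scaleR_diff_right[symmetric])
      also have "\<dots> \<le> L * (exp (k * s) * d)"
        using Lpos by (intro mult_left_mono) (auto simp: d_def dist_bounded)
      finally show "norm (H (apply_bcontfun g) s - H (apply_bcontfun h) s) \<le> (L*d) * exp (k * s)"
        by (simp add: algebra_simps)
    qed
    also have "\<dots> = (L*d) * ((exp (k * u) - 1) / k)"
      using integral_unique[OF has_integral_mult_right[OF E, of "L*d"]] by simp
    finally have B: "norm (integral {0..u} (H (apply_bcontfun g)) - integral {0..u} (H (apply_bcontfun h)))
       \<le> (L*d) * ((exp (k * u) - 1) / k)"
      using Henstock_Kurzweil_Integration.integral_diff[OF int1] by simp
    have "dist (P g t) (P h t) = exp (-k * u) * norm (integral {0..u} (H (apply_bcontfun g)) - integral {0..u} (H (apply_bcontfun h)))"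
      by (simp add: Papp Q_def u_def[symmetric] dist_norm scaleR_diff_right[symmetric])
    also have "\<dots> \<le> exp (-k * u) * ((L*d) * ((exp (k * u) - 1) / k))"
      by (rule mult_left_mono[OF B]) simp
    also have "\<dots> = (L*d/k) * (1 - exp (-k * u))"
      using k0 by (simp add: field_simps exp_minus)
    also have "\<dots> \<le> (L*d/k)"
    proof -
      have "L*d/k \<ge> 0" using k0 Lpos by (simp add: d_def)
      moreover have "1 - exp (-k * u) \<le> 1" by simp
      ultimately show ?thesis by (metis mult_left_mono mult.right_neutral)
    qed
    also have "\<dots> = (1/2) * dist g h" using Lpos by (simp add: k_def d_def)
    finally show "dist (P g t) (P h t) \<le> (1/2) * dist g h" .
  qed
  obtain g where gfix: "P g = g"
    using banach_fix_type[of "1/2" P] contr by auto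
  define \<phi> where "\<phi> t = x0 + exp (k * t) *\<^sub>R g t" for t
  have gQ: "apply_bcontfun g t = Q (apply_bcontfun g) t" for t
    by (metis Papp gfix)
  have \<phi>I: "\<phi> t = x0 + integral {0..t} (H (apply_bcontfun g))" if "t \<ge> 0" for t
    using that by (subst \<phi>_def, subst gQ) (simp add: Q_def exp_minus)
  have Hg: "H (apply_bcontfun g) s = G (\<phi> s)" for s by (simp add: H_def \<phi>_def)
  show ?thesis
  proof (intro exI conjI allI impI)
    show "\<phi> 0 = x0" using \<phi>I[of 0] by simp
    fix t :: real assume t0: "t \<ge> 0"
    have "((\<lambda>u. integral {0..u} (H (apply_bcontfun g))) has_vector_derivative H (apply_bcontfun g) t) (at t within {0..t+1})"
      by (rule integral_has_vector_derivative)
         (use t0 in \<open>auto intro!: continuous_on_subset[OF Hc] simp: continuous_on_apply_bcontfun\<close>)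
    then have "((\<lambda>u. x0 + integral {0..u} (H (apply_bcontfun g))) has_vector_derivative G (\<phi> t)) (at t within {0..})"
      using at_within_Ici_Icc[OF t0, of "t+1"] Hg
      by (auto intro!: derivative_eq_intros)
    then show "(\<phi> has_vector_derivative G (\<phi> t)) (at t within {0..})"
      by (rule has_vector_derivative_transform[rotated 2]) (use t0 \<phi>I in auto)
  qed
qed



lemma C1_cball_lipschitz:
  fixes g :: "'a::euclidean_space \<Rightarrow> 'b::real_normed_vector"
  assumes d: "\<And>x. x \<in> U \<Longrightarrow> (g has_derivative blinfun_apply (g' x)) (at x)"
    and c: "continuous_on U g'" and sub: "cball a r \<subseteq> U"
  shows "\<exists>L. L-lipschitz_on (cball a r) g"
proof -
  have "compact (g' ` cball a r)"
    by (rule compact_continuous_image[OF continuous_on_subset[OF c sub]]) simp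
  then obtain B where B: "B > 0" "\<And>x. x \<in> cball a r \<Longrightarrow> norm (g' x) \<le> B"
    by (auto dest!: compact_imp_bounded simp: bounded_pos)
  have "B-lipschitz_on (cball a r) g"
  proof (rule bounded_derivative_imp_lipschitz)
    show "(g has_derivative blinfun_apply (g' x)) (at x within cball a r)" if "x \<in> cball a r" for x
      using d[of x] sub that has_derivative_at_withinI by blast
    show "onorm (blinfun_apply (g' x)) \<le> B" if "x \<in> cball a r" for x
      using B(2)[OF that] by (simp add: norm_blinfun.rep_eq)
  qed (use B in auto)
  then show ?thesis by blast
qed

lemma inner_formula_lipschitz:
  fixes gv :: "'a::real_inner \<Rightarrow> 'a" and A :: "'a \<Rightarrow> ('a \<Rightarrow>\<^sub>L 'c::real_inner)" and b :: "'a \<Rightarrow> 'c"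
  assumes form: "\<And>x h. x \<in> S \<Longrightarrow> gv x \<bullet> h = blinfun_apply (A x) h \<bullet> b x"
    and LA: "L1-lipschitz_on S A" and Lb: "L2-lipschitz_on S b"
    and BA: "\<And>x. x \<in> S \<Longrightarrow> norm (A x) \<le> B1" and Bb: "\<And>x. x \<in> S \<Longrightarrow> norm (b x) \<le> B2"
    and B1: "B1 \<ge> 0" and B2: "B2 \<ge> 0"
  shows "(L1*B2 + B1*L2)-lipschitz_on S gv"
proof (rule lipschitz_onI)
  have L1: "L1 \<ge> 0" and L2: "L2 \<ge> 0" using LA Lb lipschitz_on_nonneg by auto
  show "0 \<le> L1*B2 + B1*L2" using L1 L2 B1 B2 by simp
  fix x y assume x: "x \<in> S" and y: "y \<in> S"
  define v where "v = gv x - gv y"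
  have "norm v ^ 2 = v \<bullet> v" by (simp add: power2_norm_eq_inner)
  also have "\<dots> = gv x \<bullet> v - gv y \<bullet> v" by (simp add: v_def inner_diff_left)
  also have "\<dots> = (A x v - A y v) \<bullet> b x + A y v \<bullet> (b x - b y)"
    using form[OF x, of v] form[OF y, of v] by (simp add: inner_diff_left inner_diff_right)
  also have "\<dots> \<le> norm (A x v - A y v) * norm (b x) + norm (A y v) * norm (b x - b y)"
    by (smt (verit) Cauchy_Schwarz_ineq2)
  also have "\<dots> \<le> (L1 * dist x y * norm v) * B2 + (B1 * norm v) * (L2 * dist x y)"
  proof (intro add_mono mult_mono)
    have "norm (A x v - A y v) = norm (blinfun_apply (A x - A y) v)" by (simp add: blinfun.diff_left)
    also have "\<dots> \<le> norm (A x - A y) * norm v" by (rule norm_blinfun)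
    also have "\<dots> \<le> L1 * dist x y * norm v"
      using lipschitz_onD[OF LA x y] by (intro mult_right_mono) (auto simp: dist_norm)
    finally show "norm (A x v - A y v) \<le> L1 * dist x y * norm v" .
    show "norm (b x) \<le> B2" using Bb x .
    have "norm (A y v) \<le> norm (A y) * norm v" by (rule norm_blinfun)
    also have "\<dots> \<le> B1 * norm v" using BA[OF y] by (intro mult_right_mono) auto
    finally show "norm (A y v) \<le> B1 * norm v" .
    show "norm (b x - b y) \<le> L2 * dist x y" using lipschitz_onD[OF Lb x y] by (simp add: dist_norm)
  qed (use L1 L2 B1 B2 in auto)
  also have "\<dots> = ((L1*B2 + B1*L2) * dist x y) * norm v" by (simp add: algebra_simps)
  finally have *: "norm v * norm v \<le> ((L1*B2 + B1*L2) * dist x y) * norm v" by (simp add: power2_eq_square)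
  show "dist (gv x) (gv y) \<le> (L1*B2 + B1*L2) * dist x y"
  proof (cases "norm v = 0")
    case True thus ?thesis using L1 L2 B1 B2 by (simp add: v_def dist_norm)
  next
    case False
    then have "norm v > 0" by simp
    with * have "norm v \<le> (L1*B2 + B1*L2) * dist x y" by (simp add: mult_le_cancel_right)
    thus ?thesis by (simp add: v_def dist_norm)
  qed
qed

lemma grad_V_formula:
  fixes f :: "real^'n \<Rightarrow> real^'m" and K :: "real^'m^'m" and V :: "real^'n \<Rightarrow> real"
  assumes hf: "(f has_derivative blinfun_apply F) (at x)" and symK: "transpose K = K"
    and V_def: "\<And>y. V y = (1/2) * ((f y - f x0) \<bullet> (K *v (f y - f x0)))"
  shows "grad V x = (\<chi> i. blinfun_apply F (axis i 1) \<bullet> (K *v (f x - f x0)))"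
    and "(V has_derivative (\<lambda>h. grad V x \<bullet> h)) (at x)"
    and "\<And>h. grad V x \<bullet> h = blinfun_apply F h \<bullet> (K *v (f x - f x0))"
proof -
  define u where "u = f x - f x0"
  define g0 where "g0 = (\<chi> i. blinfun_apply F (axis i 1) \<bullet> (K *v u))"
  have g0h: "g0 \<bullet> h = blinfun_apply F h \<bullet> (K *v u)" for h
  proof -
    have "g0 \<bullet> h = (\<Sum>i\<in>UNIV. h$i * (blinfun_apply F (axis i 1) \<bullet> (K *v u)))"
      by (simp add: g0_def inner_vec_def mult.commute)
    also have "\<dots> = (\<Sum>i\<in>UNIV. h$i *\<^sub>R blinfun_apply F (axis i 1)) \<bullet> (K *v u)"
      by (simp add: inner_sum_left)
    also have "(\<Sum>i\<in>UNIV. h$i *\<^sub>R blinfun_apply F (axis i 1)) = blinfun_apply F (\<Sum>i\<in>UNIV. h$i *\<^sub>R axis i 1)"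
      by (simp add: blinfun.sum_right blinfun.scaleR_right)
    also have "(\<Sum>i\<in>UNIV. h$i *\<^sub>R axis i 1) = h"
      using basis_expansion[of h] by (simp add: scalar_mult_eq_scaleR)
    finally show ?thesis .
  qed
  have Veq: "V = (\<lambda>y. (1/2) * ((f y - f x0) \<bullet> (K *v (f y - f x0))))" using V_def by auto
  have D: "(V has_derivative (\<lambda>h. (1/2) * (blinfun_apply F h \<bullet> (K *v u) + u \<bullet> (K *v blinfun_apply F h)))) (at x)"
    unfolding Veq u_def
    by (auto intro!: derivative_eq_intros hf bounded_linear.has_derivative[OF matrix_vector_mul_bounded_linear]
        simp: matrix_vector_right_distrib)
  have sym: "a \<bullet> (K *v b) = (K *v a) \<bullet> b" for a b
    by (metis dot_lmul_matrix symK transpose_matrix_vector)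
  have D': "(V has_derivative (\<lambda>h. g0 \<bullet> h)) (at x)"
    using D by (simp add: g0h sym inner_commute[of "K *v u"])
  have ex: "(V has_derivative (\<lambda>h. grad V x \<bullet> h)) (at x)"
    unfolding grad_def by (rule someI[of _ g0]) (rule D')
  have "(\<lambda>h. grad V x \<bullet> h) = (\<lambda>h. g0 \<bullet> h)" by (rule has_derivative_unique[OF ex D'])
  then have "grad V x \<bullet> (grad V x - g0) = g0 \<bullet> (grad V x - g0)" by metis
  then have "(grad V x - g0) \<bullet> (grad V x - g0) = 0" by (simp add: inner_diff_left)
  then have gg: "grad V x = g0" by simp
  show "grad V x = (\<chi> i. blinfun_apply F (axis i 1) \<bullet> (K *v (f x - f x0)))" using gg by (simp add: g0_def u_def)
  show "(V has_derivative (\<lambda>h. grad V x \<bullet> h)) (at x)" by (rule ex)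
  show "grad V x \<bullet> h = blinfun_apply F h \<bullet> (K *v (f x - f x0))" for h using gg g0h by (simp add: u_def)
qed

lemma V_decrease:
  fixes \<psi> :: "real \<Rightarrow> real^'n" and V :: "real^'n \<Rightarrow> real"
  assumes ab: "a \<le> b" and cont: "continuous_on {a..b} \<psi>" and inU: "\<And>s. s \<in> {a..b} \<Longrightarrow> \<psi> s \<in> U"
    and Vc: "continuous_on U V"
    and der: "\<And>s. a < s \<Longrightarrow> s < b \<Longrightarrow> (\<psi> has_vector_derivative (X (\<psi> s) - grad V (\<psi> s))) (at s)"
    and Vd: "\<And>y. y \<in> U \<Longrightarrow> (V has_derivative (\<lambda>h. grad V y \<bullet> h)) (at y)"
    and orth: "\<And>y. y \<in> U \<Longrightarrow> grad V y \<bullet> X y = 0"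
    and dl: "\<And>s. a < s \<Longrightarrow> s < b \<Longrightarrow> \<delta> \<le> norm (grad V (\<psi> s)) ^ 2"
  shows "V (\<psi> b) \<le> V (\<psi> a) - \<delta> * (b - a)"
proof -
  have "(\<lambda>s. V (\<psi> s) + \<delta> * s) b \<le> (\<lambda>s. V (\<psi> s) + \<delta> * s) a"
  proof (rule DERIV_nonpos_imp_decreasing_open[OF ab])
    fix s assume s: "a < s" "s < b"
    then have sU: "\<psi> s \<in> U" using inU by auto
    define w where "w = X (\<psi> s) - grad V (\<psi> s)"
    have "((\<lambda>s. V (\<psi> s)) has_derivative (\<lambda>h. grad V (\<psi> s) \<bullet> (h *\<^sub>R w))) (at s)"
      by (rule has_derivative_compose[OF der[OF s, unfolded has_vector_derivative_def w_def[symmetric]] Vd[OF sU]])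
    then have "((\<lambda>s. V (\<psi> s)) has_real_derivative (grad V (\<psi> s) \<bullet> w)) (at s)"
      by (simp add: has_field_derivative_def mult.commute[of _ "grad V (\<psi> s) \<bullet> w"])
    then have "((\<lambda>s. V (\<psi> s) + \<delta> * s) has_real_derivative (grad V (\<psi> s) \<bullet> w + \<delta>)) (at s)"
      by (auto intro!: derivative_eq_intros)
    moreover have "grad V (\<psi> s) \<bullet> w + \<delta> \<le> 0"
      using orth[OF sU] dl[OF s] by (simp add: w_def inner_diff_right power2_norm_eq_inner)
    ultimately show "\<exists>y. ((\<lambda>s. V (\<psi> s) + \<delta> * s) has_real_derivative y) (at s) \<and> y \<le> 0" by blast
  next
    show "continuous_on {a..b} (\<lambda>s. V (\<psi> s) + \<delta> * s)"
      by (intro continuous_intros continuous_on_compose2[OF Vc cont]) (use inU in auto)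
  qed
  then show ?thesis by (simp add: algebra_simps)
qed



lemma pos_min:
  fixes g :: "'a::metric_space \<Rightarrow> real"
  assumes "compact K" "continuous_on K g" "\<And>x. x \<in> K \<Longrightarrow> g x > 0"
  shows "\<exists>\<mu>>0. \<forall>x\<in>K. \<mu> \<le> g x"
proof (cases "K = {}")
  case True thus ?thesis by (auto intro: exI[of _ 1])
next
  case False
  obtain xm where "xm \<in> K" "\<forall>y\<in>K. g xm \<le> g y"
    using continuous_attains_inf[OF assms(1) False assms(2)] by blast
  then show ?thesis using assms(3) by blast
qed

lemma at_within_Ici_pos: "0 < (s::real) \<Longrightarrow> at s within {0..} = at s"
  by (rule at_within_interior) simp

lemma deriv_cont_on:
  fixes \<phi> :: "real \<Rightarrow> 'a::real_normed_vector"
  assumes "\<And>t. t \<in> S \<Longrightarrow> (\<phi> has_vector_derivative D t) (at t within S)"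
  shows "continuous_on S \<phi>"
  using assms has_vector_derivative_continuous continuous_on_eq_continuous_within by blast

theorem theorem4:
  fixes U W :: "(real^'n) set"
    and X :: "real^'n \<Rightarrow> real^'n"
    and f :: "real^'n \<Rightarrow> real^'m"
    and x0 :: "real^'n"
    and K :: "real^'m^'m"
    and V :: "real^'n \<Rightarrow> real"
  assumes U_open: "open U"
    and X_C1: "C1_on U X"
    and f_C2: "C2_on U f"
    and x0_in: "x0 \<in> U"
    and K_spd: "sym_pos_def K"
    and V_def: "\<And>x. V x = (1/2) * ((f x - f x0) \<bullet> (K *v (f x - f x0)))"
    and orth: "\<And>x. x \<in> U \<Longrightarrow> grad V x \<bullet> X x = 0"
    and Z_compact: "compact {x \<in> U. V x = 0}"
    and W_open: "open W" and W_sub: "W \<subseteq> U" and Z_sub_W: "{x \<in> U. V x = 0} \<subseteq> W"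
    and onto: "\<And>x. x \<in> W - {x \<in> U. V x = 0} \<Longrightarrow> surj (frechet_derivative f (at x))"
  shows "\<exists>N c. open N \<and> {x \<in> U. V x = 0} \<subseteq> N \<and> N \<subseteq> W \<and> c > 0 \<and>
    (\<forall>x \<in> {y \<in> N. V y \<le> c}. \<exists>\<phi>. \<phi> 0 = x \<and>
        (\<forall>t\<ge>0. \<phi> t \<in> N \<and> (\<phi> has_vector_derivative (X (\<phi> t) - grad V (\<phi> t))) (at t within {0..}))) \<and>
    (\<forall>\<phi> T. \<phi> 0 \<in> {y \<in> N. V y \<le> c} \<and>
        (\<forall>t\<in>{0..T}. \<phi> t \<in> N \<and> (\<phi> has_vector_derivative (X (\<phi> t) - grad V (\<phi> t))) (at t within {0..T}))
        \<longrightarrow> (\<forall>t\<in>{0..T}. \<phi> t \<in> {y \<in> N. V y \<le> c})) \<and>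
    (\<forall>\<phi>. \<phi> 0 \<in> {y \<in> N. V y \<le> c} \<and>
        (\<forall>t\<ge>0. \<phi> t \<in> N \<and> (\<phi> has_vector_derivative (X (\<phi> t) - grad V (\<phi> t))) (at t within {0..}))
        \<longrightarrow> ((\<lambda>t. infdist (\<phi> t) {x \<in> U. V x = 0}) \<longlongrightarrow> 0) at_top)"
proof -
  define Z where "Z = {x \<in> U. V x = 0}"
  obtain f' where hf: "\<And>x. x \<in> U \<Longrightarrow> (f has_derivative blinfun_apply (f' x)) (at x)" and f'C1: "C1_on U f'"
    using f_C2 unfolding C2_on_def by blast
  obtain f'' where hf': "\<And>x. x \<in> U \<Longrightarrow> (f' has_derivative blinfun_apply (f'' x)) (at x)" and cf'': "continuous_on U f''"
    using f'C1 unfolding C1_on_def by blast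
  obtain X' where hX: "\<And>x. x \<in> U \<Longrightarrow> (X has_derivative blinfun_apply (X' x)) (at x)" and cX': "continuous_on U X'"
    using X_C1 unfolding C1_on_def by blast
  have symK: "transpose K = K" and Kpos: "\<And>v. v \<noteq> 0 \<Longrightarrow> v \<bullet> (K *v v) > 0"
    using K_spd unfolding sym_pos_def_def by auto
  have Vd: "\<And>y. y \<in> U \<Longrightarrow> (V has_derivative (\<lambda>h. grad V y \<bullet> h)) (at y)"
    using grad_V_formula(2)[OF hf symK V_def] by blast
  have gform: "\<And>y h. y \<in> U \<Longrightarrow> grad V y \<bullet> h = blinfun_apply (f' y) h \<bullet> (K *v (f y - f x0))"
    using grad_V_formula(3)[OF hf symK V_def] by blast
  have cf': "continuous_on U f'"
    by (rule continuous_at_imp_continuous_on) (use hf' has_derivative_continuous in blast)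
  have cf: "continuous_on U f"
    by (rule continuous_at_imp_continuous_on) (use hf has_derivative_continuous in blast)
  have Vc: "continuous_on U V"
    by (rule continuous_at_imp_continuous_on) (use Vd has_derivative_continuous in blast)
  have V0: "V y \<ge> 0" for y
    using Kpos[of "f y - f x0"] by (cases "f y - f x0 = 0") (auto simp: V_def)
  have V0iff: "V y = 0 \<longleftrightarrow> f y = f x0" for y
    using Kpos[of "f y - f x0"] by (cases "f y - f x0 = 0") (auto simp: V_def)
  have gnz: "grad V y \<noteq> 0" if y: "y \<in> W" "V y \<noteq> 0" for y
  proof
    assume g0: "grad V y = 0"
    have yU: "y \<in> U" using y W_sub by auto
    have "surj (blinfun_apply (f' y))"
      using onto[of y] y yU frechet_derivative_at[OF hf[OF yU]] by auto
    then obtain h where h: "blinfun_apply (f' y) h = K *v (f y - f x0)" by (metis surjD)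
    have "0 = grad V y \<bullet> h" using g0 by simp
    also have "\<dots> = (K *v (f y - f x0)) \<bullet> (K *v (f y - f x0))" using gform[OF yU, of h] h by simp
    finally have "K *v (f y - f x0) = 0" by simp
    then have "V y = 0" by (simp add: V_def)
    with y show False by simp
  qed
  have Floc: "\<exists>u>0. \<exists>L. L-lipschitz_on (cball a u) (\<lambda>y. X y - grad V y)" if aU: "a \<in> U" for a
  proof -
    obtain u where u: "u > 0" "cball a u \<subseteq> U" using open_contains_cball U_open aU by blast
    obtain LX where LX: "LX-lipschitz_on (cball a u) X" using C1_cball_lipschitz[OF hX cX' u(2)] by blast
    obtain L1 where L1: "L1-lipschitz_on (cball a u) f'" using C1_cball_lipschitz[OF hf' cf'' u(2)] by blast
    obtain Lf where Lf: "Lf-lipschitz_on (cball a u) f" using C1_cball_lipschitz[OF hf cf' u(2)] by blast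
    obtain CK where CK: "CK > 0" "\<And>v. norm (K *v v) \<le> norm v * CK"
      using bounded_linear.pos_bounded[OF matrix_vector_mul_bounded_linear[of K]] by blast
    have Lb: "(CK*Lf)-lipschitz_on (cball a u) (\<lambda>y. K *v (f y - f x0))"
    proof (rule lipschitz_onI)
      fix x y assume "x \<in> cball a u" "y \<in> cball a u"
      have "dist (K *v (f x - f x0)) (K *v (f y - f x0)) = norm (K *v (f x - f y))"
        by (simp add: dist_norm matrix_vector_mult_diff_distrib)
      also have "\<dots> \<le> norm (f x - f y) * CK" by (rule CK(2))
      also have "\<dots> \<le> (Lf * dist x y) * CK"
        using lipschitz_onD[OF Lf \<open>x \<in> _\<close> \<open>y \<in> _\<close>] CK by (intro mult_right_mono) (auto simp: dist_norm)
      finally show "dist (K *v (f x - f x0)) (K *v (f y - f x0)) \<le> CK * Lf * dist x y" by (simp add: algebra_simps)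
    qed (use CK lipschitz_on_nonneg[OF Lf] in simp)
    have "compact (f' ` cball a u)"
      by (rule compact_continuous_image[OF continuous_on_subset[OF cf' u(2)]]) simp
    then obtain B1 where B1: "B1 > 0" "\<And>x. x \<in> cball a u \<Longrightarrow> norm (f' x) \<le> B1"
      by (auto dest!: compact_imp_bounded simp: bounded_pos)
    have "compact ((\<lambda>y. K *v (f y - f x0)) ` cball a u)"
      by (rule compact_continuous_image[OF continuous_on_subset[OF _ u(2)]])
         (rule bounded_linear.continuous_on[OF matrix_vector_mul_bounded_linear], intro continuous_intros cf, simp)
    then obtain B2 where B2: "B2 > 0" "\<And>x. x \<in> cball a u \<Longrightarrow> norm (K *v (f x - f x0)) \<le> B2"
      by (auto dest!: compact_imp_bounded simp: bounded_pos)
    have Lg: "(L1*B2 + B1*(CK*Lf))-lipschitz_on (cball a u) (grad V)"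
      by (rule inner_formula_lipschitz[OF _ L1 Lb B1(2) B2(2)]) (use gform u(2) B1 B2 in auto)
    have "(LX + (L1*B2 + B1*(CK*Lf)))-lipschitz_on (cball a u) (\<lambda>y. X y - grad V y)"
      by (rule lipschitz_on_diff[OF LX Lg])
    then show ?thesis using u by blast
  qed
  have Fc: "continuous_on U (\<lambda>y. X y - grad V y)"
  proof (rule continuous_at_imp_continuous_on, rule ballI)
    fix a assume aU: "a \<in> U"
    obtain u L where u: "u > 0" "L-lipschitz_on (cball a u) (\<lambda>y. X y - grad V y)" using Floc[OF aU] by blast
    have "continuous_on (ball a u) (\<lambda>y. X y - grad V y)"
      using lipschitz_on_continuous_on[OF lipschitz_on_subset[OF u(2) ball_subset_cball]] .
    then show "isCont (\<lambda>y. X y - grad V y) a"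
      using continuous_on_eq_continuous_at[OF open_ball] u(1) centre_in_ball by blast
  qed
  have gvc: "continuous_on U (grad V)"
  proof -
    have Xc: "continuous_on U X"
      by (rule continuous_at_imp_continuous_on) (use hX has_derivative_continuous in blast)
    have "continuous_on U (\<lambda>y. X y - (X y - grad V y))" by (intro continuous_intros Xc Fc)
    then show ?thesis by simp
  qed
  have Zc: "compact Z" using Z_compact by (simp add: Z_def)
  have x0Z: "x0 \<in> Z" using x0_in by (simp add: Z_def V_def)
  have Zne: "Z \<noteq> {}" using x0Z by blast
  have Zcl: "closed Z" using Zc compact_imp_closed by blast
  obtain \<epsilon> where \<epsilon>: "\<epsilon> > 0" "(\<Union>z\<in>Z. cball z \<epsilon>) \<subseteq> W"
    using compact_subset_open_imp_cball_epsilon_subset[OF Zc W_open Z_sub_W[folded Z_def]] by blast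
  define r where "r = \<epsilon> / 3"
  have r0: "r > 0" using \<epsilon> by (simp add: r_def)
  define dZ where "dZ x = infdist x Z" for x
  have dZc: "continuous_on S dZ" for S unfolding dZ_def by (intro continuous_intros)
  have dZ0: "dZ x \<ge> 0" for x by (simp add: dZ_def infdist_nonneg)
  have inW: "x \<in> W" if "dZ x \<le> 2*r" for x
  proof -
    obtain z where z: "z \<in> Z" "infdist x Z = dist x z" using infdist_attains_inf[OF Zcl Zne] by blast
    then have "x \<in> cball z \<epsilon>" using that r0 by (simp add: dZ_def r_def dist_commute)
    then show ?thesis using \<epsilon> z by blast
  qed
  have inU: "x \<in> U" if "dZ x \<le> 2*r" for x using inW[OF that] W_sub by blast
  have notZ: "V x > 0" if "dZ x > 0" "dZ x \<le> 2*r" for x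
  proof -
    have "x \<notin> Z" using that by (auto simp: dZ_def)
    then show ?thesis using inU[OF that(2)] V0[of x] by (auto simp: Z_def)
  qed
  define C where "C = {x. dZ x \<le> 2*r}"
  have Cc: "compact C" unfolding C_def dZ_def by (rule compact_infdist_le[OF Zne Zc]) (use r0 in simp)
  have CU: "C \<subseteq> U" using inU by (auto simp: C_def)
  have closed_le: "closed {x. dZ x \<le> a}" for a by (rule closed_Collect_le) (auto intro: dZc continuous_intros)
  have closed_ge: "closed {x. a \<le> dZ x}" for a by (rule closed_Collect_le) (auto intro: dZc continuous_intros)
  define A where "A = C \<inter> {x. r \<le> dZ x}"
  have Ac: "compact A" unfolding A_def using Cc closed_ge by blast
  have AU: "A \<subseteq> U" using CU by (auto simp: A_def)
  have Apos: "V x > 0" if "x \<in> A" for x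
    using that r0 by (intro notZ) (auto simp: A_def C_def)
  obtain m where m: "m > 0" "\<And>x. x \<in> A \<Longrightarrow> m \<le> V x"
    using pos_min[OF Ac continuous_on_subset[OF Vc AU] Apos] by blast
  define c where "c = m / 2"
  have c0: "c > 0" "c < m" using m by (auto simp: c_def)
  define N where "N = {x. dZ x < 2*r}"
  have Nopen: "open N" unfolding N_def by (rule open_Collect_less) (auto intro: dZc continuous_intros)
  have ZN: "Z \<subseteq> N" using r0 by (auto simp: N_def dZ_def)
  have NW: "N \<subseteq> W" using inW by (auto simp: N_def)
  have NU: "N \<subseteq> U" using NW W_sub by blast
  have S0r: "dZ y < r" if "y \<in> N" "V y \<le> c" for y
  proof (rule ccontr)
    assume "\<not> dZ y < r"
    then have "y \<in> A" using that by (auto simp: A_def C_def N_def)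
    then show False using m(2)[of y] that c0 by simp
  qed
  define F where "F y = X y - grad V y" for y
  have llC: "local_lipschitz {0::real} C (\<lambda>_. F)"
  proof (rule local_lipschitzI)
    fix t x assume "t \<in> {0::real}" "x \<in> C"
    then obtain u L where u: "u > 0" "L-lipschitz_on (cball x u) F" using Floc CU unfolding F_def by blast
    then show "\<exists>u>0. \<exists>L. \<forall>t\<in>cball t u \<inter> {0}. L-lipschitz_on (cball x u \<inter> C) F"
      using lipschitz_on_subset[OF u(2)] by blast
  qed
  obtain LF where LF: "LF-lipschitz_on C F"
    using local_lipschitz_compact_implies_lipschitz[OF llC Cc compact_sing] by auto
  have LF0: "LF \<ge> 0" using LF lipschitz_on_nonneg by blast
  have "compact (F ` C)"
    by (rule compact_continuous_image[OF lipschitz_on_continuous_on[OF LF] Cc])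
  then obtain MF where MF: "MF > 0" "\<And>x. x \<in> C \<Longrightarrow> norm (F x) \<le> MF"
    by (auto dest!: compact_imp_bounded simp: bounded_pos)
  define ch where "ch x = max 0 (min 1 (2 - dZ x / r))" for x
  have ch01: "0 \<le> ch x" "ch x \<le> 1" for x by (auto simp: ch_def)
  have ch1: "ch x = 1" if "dZ x \<le> r" for x using that r0 by (auto simp: ch_def field_simps)
  have ch0: "ch x = 0" if "x \<notin> C" for x using that r0 by (auto simp: ch_def C_def field_simps)
  have chL: "\<bar>ch x - ch y\<bar> \<le> dist x y / r" for x y
  proof -
    have "\<bar>dZ x - dZ y\<bar> \<le> dist x y" unfolding dZ_def by (rule infdist_triangle_abs)
    then have "\<bar>dZ x / r - dZ y / r\<bar> \<le> dist x y / r"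
      using r0 by (simp add: diff_divide_distrib[symmetric] abs_divide divide_right_mono)
    then show ?thesis unfolding ch_def by linarith
  qed
  define G where "G x = ch x *\<^sub>R F x" for x
  define LG where "LG = MF / r + LF + 1"
  have MFr: "MF / r > 0" using MF r0 by simp
  have LG0: "LG > 0" using MFr LF0 by (simp add: LG_def)
  have Gb: "norm (G x) \<le> MF" for x
  proof (cases "x \<in> C")
    case True
    have "ch x * norm (F x) \<le> 1 * MF" using ch01[of x] MF(2)[OF True] by (intro mult_mono) auto
    then show ?thesis using ch01[of x] by (simp add: G_def)
  next
    case False then show ?thesis using MF by (simp add: G_def ch0)
  qed
  have Gout: "norm (G x - G y) \<le> MF / r * dist x y" if "x \<in> C" "y \<notin> C" for x y
  proof -
    have "norm (G x - G y) = ch x * norm (F x)" using that ch01[of x] by (simp add: G_def ch0)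
    also have "\<dots> \<le> (dist x y / r) * MF"
      using chL[of x y] ch0[OF that(2)] ch01[of x] MF(2)[OF that(1)] r0
      by (intro mult_mono) auto
    finally show ?thesis by (simp add: mult.commute)
  qed
  have GL: "LG-lipschitz_on UNIV G"
  proof (rule lipschitz_onI)
    show "0 \<le> LG" using LG0 by simp
    fix x y :: "real^'n"
    have dd: "0 \<le> dist x y" by simp
    have "norm (G x - G y) \<le> LG * dist x y"
    proof (cases "x \<in> C"; cases "y \<in> C")
      assume xC: "x \<in> C" and yC: "y \<in> C"
      have "G x - G y = (ch x - ch y) *\<^sub>R F x + ch y *\<^sub>R (F x - F y)"
        by (simp add: G_def algebra_simps)
      then have "norm (G x - G y) \<le> \<bar>ch x - ch y\<bar> * norm (F x) + ch y * norm (F x - F y)"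
        using ch01[of y] by (metis (no_types, lifting) abs_of_nonneg norm_scaleR norm_triangle_ineq)
      also have "\<dots> \<le> (dist x y / r) * MF + 1 * (LF * dist x y)"
        using chL[of x y] MF(2)[OF xC] ch01[of y] lipschitz_onD[OF LF xC yC] LF0
        by (intro add_mono mult_mono) (auto simp: dist_norm)
      also have "\<dots> \<le> LG * dist x y" using dd by (simp add: LG_def algebra_simps)
      finally show ?thesis .
    next
      assume xC: "x \<in> C" and yC: "y \<notin> C"
      have "norm (G x - G y) \<le> MF / r * dist x y" by (rule Gout[OF xC yC])
      also have "\<dots> \<le> LG * dist x y" using dd LF0 by (intro mult_right_mono) (auto simp: LG_def)
      finally show ?thesis .
    next
      assume xC: "x \<notin> C" and yC: "y \<in> C"
      have "norm (G x - G y) = norm (G y - G x)" by (simp add: norm_minus_commute)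
      also have "\<dots> \<le> MF / r * dist y x" by (rule Gout[OF yC xC])
      also have "\<dots> = MF / r * dist x y" by (simp add: dist_commute)
      also have "\<dots> \<le> LG * dist x y" using dd LF0 by (intro mult_right_mono) (auto simp: LG_def)
      finally show ?thesis .
    next
      assume xC: "x \<notin> C" and yC: "y \<notin> C"
      then show ?thesis using LG0 by (simp add: G_def ch0)
    qed
    then show "dist (G x) (G y) \<le> LG * dist x y" by (simp add: dist_norm)
  qed
  have GF: "G y = X y - grad V y" if "dZ y \<le> r" for y using ch1[OF that] by (simp add: G_def F_def)
  have ex: "\<forall>x \<in> {y \<in> N. V y \<le> c}. \<exists>\<phi>. \<phi> 0 = x \<and>
        (\<forall>t\<ge>0. \<phi> t \<in> N \<and> (\<phi> has_vector_derivative (X (\<phi> t) - grad V (\<phi> t))) (at t within {0..}))"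
  proof
    fix x assume x: "x \<in> {y \<in> N. V y \<le> c}"
    obtain \<phi> where \<phi>0: "\<phi> 0 = x" and \<phi>d: "\<And>t. t \<ge> 0 \<Longrightarrow> (\<phi> has_vector_derivative G (\<phi> t)) (at t within {0..})"
      using picard_global[OF GL LG0 Gb, of x] by blast
    have \<phi>c: "continuous_on {0..} \<phi>" by (rule deriv_cont_on) (use \<phi>d in auto)
    have dZc\<phi>: "continuous_on {0..} (\<lambda>t. dZ (\<phi> t))"
      by (rule continuous_on_compose2[OF dZc[of UNIV] \<phi>c]) simp
    have dZx: "dZ x < r" using S0r x by auto
    have stay: "dZ (\<phi> t) < r" if t0: "t \<ge> 0" for t
    proof (rule ccontr)
      assume nt: "\<not> dZ (\<phi> t) < r"
      define B where "B = {0..} \<inter> (\<lambda>t. dZ (\<phi> t)) -` {r..}"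
      have Bne: "B \<noteq> {}" using t0 nt by (auto simp: B_def)
      have Bcl: "closed B" unfolding B_def by (rule continuous_closed_preimage[OF dZc\<phi>]) auto
      have Bbd: "bdd_below B" unfolding bdd_below_def B_def by auto
      define T where "T = Inf B"
      have TB: "T \<in> B" using closed_contains_Inf[OF Bne Bbd Bcl] by (simp add: T_def)
      have T0: "T \<ge> 0" and dT: "r \<le> dZ (\<phi> T)" using TB by (auto simp: B_def)
      have before: "dZ (\<phi> s) < r" if "0 \<le> s" "s < T" for s
      proof (rule ccontr)
        assume "\<not> dZ (\<phi> s) < r"
        then have "s \<in> B" using that by (auto simp: B_def)
        then have "T \<le> s" unfolding T_def by (rule cInf_lower[OF _ Bbd])
        then show False using that by simp
      qed
      have Tpos: "T > 0" using dT dZx \<phi>0 T0 by (cases "T = 0") auto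
      have dT': "dZ (\<phi> T) \<le> r"
      proof -
        define B' where "B' = {0..T} \<inter> (\<lambda>t. dZ (\<phi> t)) -` {..r}"
        have "closed B'" unfolding B'_def
          by (rule continuous_closed_preimage[OF continuous_on_subset[OF dZc\<phi>]]) auto
        moreover have "{0..<T} \<subseteq> B'" using before by (auto simp: B'_def less_imp_le)
        ultimately have "closure {0..<T} \<subseteq> B'" by (rule closure_minimal[rotated])
        then have "T \<in> B'" using Tpos by auto
        then show ?thesis by (simp add: B'_def)
      qed
      have all: "dZ (\<phi> s) \<le> r" if "s \<in> {0..T}" for s
        using before[of s] dT' that by (cases "s = T") auto
      have "V (\<phi> T) \<le> V (\<phi> 0) - 0 * (T - 0)"
      proof (rule V_decrease[where U=U and X=X])
        show "continuous_on {0..T} \<phi>" by (rule continuous_on_subset[OF \<phi>c]) auto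
        show "\<phi> s \<in> U" if "s \<in> {0..T}" for s using all[OF that] r0 by (intro inU) simp
        show "(\<phi> has_vector_derivative (X (\<phi> s) - grad V (\<phi> s))) (at s)" if "0 < s" "s < T" for s
          using \<phi>d[of s] that at_within_Ici_pos[of s] GF[OF all[of s]] by auto
      qed (use T0 Vc Vd orth in auto)
      moreover have "\<phi> T \<in> A" using dT dT' r0 by (auto simp: A_def C_def)
      then have "m \<le> V (\<phi> T)" using m by auto
      moreover have "V (\<phi> 0) \<le> c" using x \<phi>0 by auto
      ultimately show False using c0 by simp
    qed
    show "\<exists>\<phi>. \<phi> 0 = x \<and>
        (\<forall>t\<ge>0. \<phi> t \<in> N \<and> (\<phi> has_vector_derivative (X (\<phi> t) - grad V (\<phi> t))) (at t within {0..}))"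
    proof (intro exI[of _ \<phi>] conjI allI impI)
      show "\<phi> 0 = x" by (rule \<phi>0)
      fix t :: real assume t: "t \<ge> 0"
      show "\<phi> t \<in> N" using stay[OF t] r0 by (simp add: N_def)
      show "(\<phi> has_vector_derivative (X (\<phi> t) - grad V (\<phi> t))) (at t within {0..})"
        using \<phi>d[OF t] GF[of "\<phi> t"] stay[OF t] by simp
    qed
  qed
  have inv: "\<forall>\<phi> T. \<phi> 0 \<in> {y \<in> N. V y \<le> c} \<and>
        (\<forall>t\<in>{0..T}. \<phi> t \<in> N \<and> (\<phi> has_vector_derivative (X (\<phi> t) - grad V (\<phi> t))) (at t within {0..T}))
        \<longrightarrow> (\<forall>t\<in>{0..T}. \<phi> t \<in> {y \<in> N. V y \<le> c})"
  proof (intro allI impI ballI)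
    fix \<phi> and T t :: real
    assume H: "\<phi> 0 \<in> {y \<in> N. V y \<le> c} \<and>
        (\<forall>t\<in>{0..T}. \<phi> t \<in> N \<and> (\<phi> has_vector_derivative (X (\<phi> t) - grad V (\<phi> t))) (at t within {0..T}))"
      and t: "t \<in> {0..T}"
    have \<phi>c: "continuous_on {0..T} \<phi>" by (rule deriv_cont_on) (use H in blast)
    have "V (\<phi> t) \<le> V (\<phi> 0) - 0 * (t - 0)"
    proof (rule V_decrease[where U=U and X=X])
      show "continuous_on {0..t} \<phi>" by (rule continuous_on_subset[OF \<phi>c]) (use t in auto)
      show "\<phi> s \<in> U" if "s \<in> {0..t}" for s using H that t NU by auto
      show "(\<phi> has_vector_derivative (X (\<phi> s) - grad V (\<phi> s))) (at s)" if "0 < s" "s < t" for s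
      proof -
        have sT: "s \<in> {0..T}" using that t by auto
        have "(\<phi> has_vector_derivative (X (\<phi> s) - grad V (\<phi> s))) (at s within {0..T})"
          using H sT by blast
        moreover have "at s within {0..T} = at s" using that t by (intro at_within_Icc_at) auto
        ultimately show ?thesis by simp
      qed
    qed (use t Vc Vd orth in auto)
    then show "\<phi> t \<in> {y \<in> N. V y \<le> c}" using H t by auto
  qed
  have conv: "\<forall>\<phi>. \<phi> 0 \<in> {y \<in> N. V y \<le> c} \<and>
        (\<forall>t\<ge>0. \<phi> t \<in> N \<and> (\<phi> has_vector_derivative (X (\<phi> t) - grad V (\<phi> t))) (at t within {0..}))
        \<longrightarrow> ((\<lambda>t. infdist (\<phi> t) Z) \<longlongrightarrow> 0) at_top"
  proof (intro allI impI)
    fix \<phi> :: "real \<Rightarrow> real^'n"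
    assume H: "\<phi> 0 \<in> {y \<in> N. V y \<le> c} \<and>
        (\<forall>t\<ge>0. \<phi> t \<in> N \<and> (\<phi> has_vector_derivative (X (\<phi> t) - grad V (\<phi> t))) (at t within {0..}))"
    have \<phi>0: "V (\<phi> 0) \<le> c" using H by auto
    have \<phi>N: "\<phi> t \<in> N" if "t \<ge> 0" for t using H that by blast
    have \<phi>d: "(\<phi> has_vector_derivative (X (\<phi> t) - grad V (\<phi> t))) (at t within {0..})" if "t \<ge> 0" for t
      using H that by blast
    have \<phi>c: "continuous_on {0..} \<phi>" by (rule deriv_cont_on) (use \<phi>d in auto)
    have der: "(\<phi> has_vector_derivative (X (\<phi> s) - grad V (\<phi> s))) (at s)" if "0 < s" for s
      using \<phi>d[of s] that at_within_Ici_pos[of s] by simp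
    have dec: "V (\<phi> b) \<le> V (\<phi> a) - \<delta> * (b - a)"
      if "0 \<le> a" "a \<le> b" "\<And>s. a < s \<Longrightarrow> s < b \<Longrightarrow> \<delta> \<le> norm (grad V (\<phi> s)) ^ 2" for a b \<delta>
    proof (rule V_decrease[where U=U and X=X])
      show "continuous_on {a..b} \<phi>" by (rule continuous_on_subset[OF \<phi>c]) (use that in auto)
      show "\<phi> s \<in> U" if "s \<in> {a..b}" for s using \<phi>N[of s] that \<open>0 \<le> a\<close> NU by auto
      show "(\<phi> has_vector_derivative (X (\<phi> s) - grad V (\<phi> s))) (at s)" if "a < s" "s < b" for s
        using der[of s] that \<open>0 \<le> a\<close> by simp
    qed (use that Vc Vd orth in auto)
    have Vle: "V (\<phi> t) \<le> c" if "t \<ge> 0" for t using dec[of 0 t 0] that \<phi>0 by simp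
    have dr: "dZ (\<phi> t) < r" if "t \<ge> 0" for t using S0r[OF \<phi>N[OF that] Vle[OF that]] .
    show "((\<lambda>t. infdist (\<phi> t) Z) \<longlongrightarrow> 0) at_top"
    proof (rule tendstoI)
      fix e :: real assume e: "e > 0"
      define Ke where "Ke = C \<inter> {x. e \<le> dZ x} \<inter> {x. dZ x \<le> r}"
      have Kec: "compact Ke" unfolding Ke_def using Cc closed_ge closed_le by blast
      have KeU: "Ke \<subseteq> U" using CU by (auto simp: Ke_def)
      have Kepos: "V x > 0" if "x \<in> Ke" for x using that e by (intro notZ) (auto simp: Ke_def C_def)
      obtain \<mu> where \<mu>: "\<mu> > 0" "\<And>x. x \<in> Ke \<Longrightarrow> \<mu> \<le> V x"
        using pos_min[OF Kec continuous_on_subset[OF Vc KeU] Kepos] by blast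
      define K\<mu> where "K\<mu> = (C \<inter> V -` {\<mu>..c}) \<inter> {x. dZ x \<le> r}"
      have cl1: "closed (C \<inter> V -` {\<mu>..c})"
        by (rule continuous_closed_preimage[OF continuous_on_subset[OF Vc CU] compact_imp_closed[OF Cc]]) simp
      have "compact (C \<inter> (C \<inter> V -` {\<mu>..c}))" using Cc cl1 by blast
      then have "compact (C \<inter> V -` {\<mu>..c})" by (simp add: Int_absorb)
      then have K\<mu>c: "compact K\<mu>" unfolding K\<mu>_def using closed_le by blast
      have K\<mu>U: "K\<mu> \<subseteq> U" using CU by (auto simp: K\<mu>_def)
      have K\<mu>pos: "norm (grad V x) ^ 2 > 0" if "x \<in> K\<mu>" for x
      proof -
        have "x \<in> W" using that r0 by (intro inW) (auto simp: K\<mu>_def)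
        moreover have "V x \<noteq> 0" using that \<mu> by (auto simp: K\<mu>_def)
        ultimately show ?thesis using gnz by simp
      qed
      have K\<mu>cont: "continuous_on K\<mu> (\<lambda>x. norm (grad V x) ^ 2)"
        by (intro continuous_intros continuous_on_subset[OF gvc K\<mu>U])
      obtain \<delta> where \<delta>: "\<delta> > 0" "\<And>x. x \<in> K\<mu> \<Longrightarrow> \<delta> \<le> norm (grad V x) ^ 2"
        using pos_min[OF K\<mu>c K\<mu>cont K\<mu>pos] by blast
      have "\<exists>t0\<ge>0. V (\<phi> t0) < \<mu>"
      proof (rule ccontr)
        assume "\<not> (\<exists>t0\<ge>0. V (\<phi> t0) < \<mu>)"
        then have h\<mu>: "\<mu> \<le> V (\<phi> t)" if "t \<ge> 0" for t using that by force
        define T where "T = c / \<delta> + 1"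
        have T0: "T \<ge> 0" using c0 \<delta> by (simp add: T_def)
        have "V (\<phi> T) \<le> V (\<phi> 0) - \<delta> * (T - 0)"
        proof (rule dec)
          fix s assume s: "0 < s" "s < T"
          have "\<phi> s \<in> K\<mu>" using dr[of s] Vle[of s] h\<mu>[of s] s r0 by (auto simp: K\<mu>_def C_def)
          then show "\<delta> \<le> norm (grad V (\<phi> s)) ^ 2" by (rule \<delta>(2))
        qed (use T0 in auto)
        also have "\<dots> \<le> c - \<delta> * T" using \<phi>0 by simp
        also have "\<dots> = - \<delta>" using \<delta> by (simp add: T_def algebra_simps)
        finally have "V (\<phi> T) < 0" using \<delta> by simp
        then show False using V0[of "\<phi> T"] by simp
      qed
      then obtain t0 where t0: "t0 \<ge> 0" "V (\<phi> t0) < \<mu>" by blast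
      show "\<forall>\<^sub>F t in at_top. dist (infdist (\<phi> t) Z) 0 < e"
        unfolding eventually_at_top_linorder
      proof (intro exI[of _ t0] allI impI)
        fix t assume t: "t \<ge> t0"
        have "V (\<phi> t) \<le> V (\<phi> t0) - 0 * (t - t0)" by (rule dec) (use t t0 in auto)
        then have Vt: "V (\<phi> t) < \<mu>" using t0 by simp
        have "dZ (\<phi> t) < e"
        proof (rule ccontr)
          assume "\<not> dZ (\<phi> t) < e"
          then have "\<phi> t \<in> Ke" using dr[of t] t t0 r0 by (auto simp: Ke_def C_def)
          then show False using \<mu>(2) Vt by fastforce
        qed
        then show "dist (infdist (\<phi> t) Z) 0 < e" using dZ0[of "\<phi> t"] by (simp add: dZ_def dist_real_def)
      qed
    qed
  qed
  show ?thesis unfolding Z_def[symmetric]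
    by (intro exI[of _ N] exI[of _ c] conjI Nopen ZN NW c0(1) ex inv conv)
qed

end
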